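(* Let $P$ be an $n$-element poset, $L$ a labeling of $P$, $x_0\in P$, $\tilde P=P\setminus\{x_0\}$ with the induced order, and $\tilde L=\mathrm{st}(L|_{\tilde P})$. Let $\gamma\ge0$ and suppose $x_0$ is not in the promotion chain of $L_\alpha$ for any $\alpha\in\{0,\ldots,\gamma-1\}$. Then $\mathrm{st}(L_\gamma|_{\tilde P})=\tilde\partial^{\gamma}(\tilde L)$, where $\tilde\partial$ denotes promotion on labelings of the $(n-1)$-element poset $\tilde P$.
   Context: A labeling of an $m$-element poset is a bijection to $[m]$. Promotion $\partial$ on an $m$-element poset: for non-maximal $y$, the $L$-successor of $y$ is the element greater than $y$ with minimal label; the promotion chain is $v_1=L^{-1}(1)$, $v_{i+1}$ the $L$-successor of $v_i$, ending at the first maximal $v_p$; $\partial(L)(y)=L(y)-1$ off the chain, $\partial(L)(v_i)=L(v_{i+1})-1$ for $i<p$, $\partial(L)(v_p)=m$. $L_\gamma=\partial^\gamma(L)$. For an injective $f:Y\to\mathbb Z$ on an $m$-element set, the standardization $\mathrm{st}(f)$ is the unique bijection $g:Y\to[m]$ with $g(y)<g(y')$ iff $f(y)<f(y')$. *)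

theory Defs
  imports Main
begin

definition is_poset :: "'a set \<Rightarrow> ('a \<Rightarrow> 'a \<Rightarrow> bool) \<Rightarrow> bool" where
  "is_poset P le \<longleftrightarrow> finite P \<and>
     (\<forall>x\<in>P. le x x) \<and>
     (\<forall>x\<in>P. \<forall>y\<in>P. le x y \<and> le y x \<longrightarrow> x = y) \<and>
     (\<forall>x\<in>P. \<forall>y\<in>P. \<forall>z\<in>P. le x y \<and> le y z \<longrightarrow> le x z)"

definition is_labeling :: "'a set \<Rightarrow> ('a \<Rightarrow> nat) \<Rightarrow> bool" where
  "is_labeling P L \<longleftrightarrow> bij_betw L P {1..card P}"

definition is_maximal :: "'a set \<Rightarrow> ('a \<Rightarrow> 'a \<Rightarrow> bool) \<Rightarrow> 'a \<Rightarrow> bool" where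
  "is_maximal P le y \<longleftrightarrow> y \<in> P \<and> \<not> (\<exists>z\<in>P. le y z \<and> z \<noteq> y)"

definition lsucc :: "'a set \<Rightarrow> ('a \<Rightarrow> 'a \<Rightarrow> bool) \<Rightarrow> ('a \<Rightarrow> nat) \<Rightarrow> 'a \<Rightarrow> 'a" where
  "lsucc P le L y = arg_min L (\<lambda>z. z \<in> P \<and> le y z \<and> z \<noteq> y)"

text \<open>v_(i+1) in the paper's 1-based indexing is chain_elem P le L i.\<close>
definition chain_elem :: "'a set \<Rightarrow> ('a \<Rightarrow> 'a \<Rightarrow> bool) \<Rightarrow> ('a \<Rightarrow> nat) \<Rightarrow> nat \<Rightarrow> 'a" where
  "chain_elem P le L i = (lsucc P le L ^^ i) (inv_into P L 1)"

definition chain_len :: "'a set \<Rightarrow> ('a \<Rightarrow> 'a \<Rightarrow> bool) \<Rightarrow> ('a \<Rightarrow> nat) \<Rightarrow> nat" where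
  "chain_len P le L = (LEAST i. is_maximal P le (chain_elem P le L i))"

definition promotion_chain :: "'a set \<Rightarrow> ('a \<Rightarrow> 'a \<Rightarrow> bool) \<Rightarrow> ('a \<Rightarrow> nat) \<Rightarrow> 'a set" where
  "promotion_chain P le L = {chain_elem P le L i | i. i \<le> chain_len P le L}"

definition promotion :: "'a set \<Rightarrow> ('a \<Rightarrow> 'a \<Rightarrow> bool) \<Rightarrow> ('a \<Rightarrow> nat) \<Rightarrow> ('a \<Rightarrow> nat)" where
  "promotion P le L = (\<lambda>y.
     if y \<notin> P then 0
     else if y \<in> promotion_chain P le L then
       (if is_maximal P le y then card P else L (lsucc P le L y) - 1)
     else L y - 1)"

definition standardize :: "'a set \<Rightarrow> ('a \<Rightarrow> nat) \<Rightarrow> ('a \<Rightarrow> nat)" where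
  "standardize Y f = (THE g. bij_betw g Y {1..card Y} \<and>
       (\<forall>y\<in>Y. \<forall>y'\<in>Y. g y < g y' \<longleftrightarrow> f y < f y') \<and>
       (\<forall>y. y \<notin> Y \<longrightarrow> g y = 0))"

end

theory Submission
  imports Defs
begin

lemma bij_from_inj:
  assumes "finite Y" "inj_on g Y" "g ` Y \<subseteq> {1..card Y}"
  shows "bij_betw g Y {1..card Y}"
proof -
  have "card (g ` Y) = card {1..card Y}" using assms(2) by (simp add: card_image)
  then have "g ` Y = {1..card Y}" using assms(3) by (simp add: card_subset_eq)
  then show ?thesis using assms(2) by (simp add: bij_betw_def)
qed

lemma rank_unique:
  fixes f :: "'a \<Rightarrow> nat"
  assumes fin: "finite Y" and bij: "bij_betw g Y {1..card Y}"
    and ord: "\<forall>y\<in>Y. \<forall>y'\<in>Y. g y < g y' \<longleftrightarrow> f y < f y'" and y: "y \<in> Y"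
  shows "g y = card {y'\<in>Y. f y' \<le> f y}"
proof -
  have e1: "{y'\<in>Y. f y' \<le> f y} = {y'\<in>Y. g y' \<le> g y}"
  proof -
    have "\<forall>y'\<in>Y. (f y' \<le> f y) = (g y' \<le> g y)"
    proof
      fix y' assume "y' \<in> Y"
      then have "(g y < g y') = (f y < f y')" using ord y by blast
      then show "(f y' \<le> f y) = (g y' \<le> g y)" by auto
    qed
    then show ?thesis by auto
  qed
  have inj: "inj_on g Y" using bij by (simp add: bij_betw_def)
  have im: "g ` Y = {1..card Y}" using bij by (simp add: bij_betw_def)
  have gy: "g y \<le> card Y" using im y by auto
  have "g ` {y'\<in>Y. g y' \<le> g y} = {1..g y}"
  proof
    show "g ` {y'\<in>Y. g y' \<le> g y} \<subseteq> {1..g y}" using im by force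
    show "{1..g y} \<subseteq> g ` {y'\<in>Y. g y' \<le> g y}"
    proof
      fix k assume k: "k \<in> {1..g y}"
      then have "k \<in> g ` Y" using im gy by auto
      then obtain z where "z \<in> Y" "k = g z" by auto
      then show "k \<in> g ` {y'\<in>Y. g y' \<le> g y}" using k by auto
    qed
  qed
  moreover have "card (g ` {y'\<in>Y. g y' \<le> g y}) = card {y'\<in>Y. g y' \<le> g y}"
    by (rule card_image) (rule inj_on_subset[OF inj], auto)
  ultimately show ?thesis using e1 by simp
qed

lemma std_char:
  fixes f :: "'a \<Rightarrow> nat"
  assumes fin: "finite Y" and bij: "bij_betw g Y {1..card Y}"
    and ord: "\<forall>y\<in>Y. \<forall>y'\<in>Y. g y < g y' \<longleftrightarrow> f y < f y'"
    and z: "\<forall>y. y \<notin> Y \<longrightarrow> g y = 0"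
  shows "standardize Y f = g"
  unfolding standardize_def
proof (rule the_equality)
  show "bij_betw g Y {1..card Y} \<and> (\<forall>y\<in>Y. \<forall>y'\<in>Y. (g y < g y') = (f y < f y')) \<and> (\<forall>y. y \<notin> Y \<longrightarrow> g y = 0)"
    using assms by blast
  fix g' assume h: "bij_betw g' Y {1..card Y} \<and> (\<forall>y\<in>Y. \<forall>y'\<in>Y. (g' y < g' y') = (f y < f y')) \<and> (\<forall>y. y \<notin> Y \<longrightarrow> g' y = 0)"
  show "g' = g"
  proof
    fix y show "g' y = g y"
    proof (cases "y \<in> Y")
      case True
      then show ?thesis using rank_unique[OF fin bij ord True] rank_unique[OF fin _ _ True, of g' f] h by auto
    next
      case False then show ?thesis using h z by auto
    qed
  qed
qed

lemma std_props:
  fixes f :: "'a \<Rightarrow> nat"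
  assumes fin: "finite Y" and inj: "inj_on f Y"
  shows "bij_betw (standardize Y f) Y {1..card Y} \<and>
    (\<forall>y\<in>Y. \<forall>y'\<in>Y. standardize Y f y < standardize Y f y' \<longleftrightarrow> f y < f y') \<and>
    (\<forall>y. y \<notin> Y \<longrightarrow> standardize Y f y = 0)"
proof -
  define g where "g = (\<lambda>y. if y \<in> Y then card {y'\<in>Y. f y' \<le> f y} else 0)"
  have ord: "\<forall>y\<in>Y. \<forall>y'\<in>Y. g y < g y' \<longleftrightarrow> f y < f y'"
  proof (intro ballI)
    fix y y' assume y: "y \<in> Y" and y': "y' \<in> Y"
    show "g y < g y' \<longleftrightarrow> f y < f y'"
    proof
      assume "f y < f y'"
      then have m: "y' \<in> {z\<in>Y. f z \<le> f y'} - {z\<in>Y. f z \<le> f y}" using y' by auto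
      have "{z\<in>Y. f z \<le> f y} \<subseteq> {z\<in>Y. f z \<le> f y'}" using \<open>f y < f y'\<close> by auto
      then have "{z\<in>Y. f z \<le> f y} < {z\<in>Y. f z \<le> f y'}" using m by blast
      then show "g y < g y'" using y y' fin by (simp add: g_def psubset_card_mono)
    next
      assume a: "g y < g y'"
      show "f y < f y'"
      proof (rule ccontr)
        assume "\<not> f y < f y'"
        then have "{z\<in>Y. f z \<le> f y'} \<subseteq> {z\<in>Y. f z \<le> f y}" by auto
        then have "g y' \<le> g y" using y y' fin by (simp add: g_def card_mono)
        then show False using a by simp
      qed
    qed
  qed
  have injg: "inj_on g Y"
  proof
    fix y y' assume y: "y \<in> Y" and y': "y' \<in> Y" and e: "g y = g y'"
    show "y = y'"
    proof (rule ccontr)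
      assume "y \<noteq> y'"
      then have "f y \<noteq> f y'" using inj y y' by (auto dest: inj_onD)
      then have "f y < f y' \<or> f y' < f y" by arith
      moreover have "(g y < g y') = (f y < f y')" "(g y' < g y) = (f y' < f y)" using ord y y' by auto
      ultimately show False using e by auto
    qed
  qed
  have rng: "g ` Y \<subseteq> {1..card Y}"
  proof
    fix k assume "k \<in> g ` Y"
    then obtain y where y: "y \<in> Y" "k = g y" by auto
    have "{y'\<in>Y. f y' \<le> f y} \<noteq> {}" using y by auto
    then have "card {y'\<in>Y. f y' \<le> f y} \<ge> 1" using fin
      by (simp add: Suc_le_eq card_gt_0_iff)
    moreover have "card {y'\<in>Y. f y' \<le> f y} \<le> card Y" using fin by (intro card_mono) auto
    ultimately show "k \<in> {1..card Y}" using y by (simp add: g_def)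
  qed
  have bij: "bij_betw g Y {1..card Y}" by (rule bij_from_inj[OF fin injg rng])
  have z: "\<forall>y. y \<notin> Y \<longrightarrow> g y = 0" by (simp add: g_def)
  have "standardize Y f = g" by (rule std_char[OF fin bij ord z])
  then show ?thesis using bij ord z by simp
qed

definition sig :: "'a set \<Rightarrow> ('a \<Rightarrow> 'a \<Rightarrow> bool) \<Rightarrow> ('a \<Rightarrow> nat) \<Rightarrow> 'a \<Rightarrow> 'a" where
  "sig P le L y = (if y \<in> promotion_chain P le L then lsucc P le L y else y)"

locale plab =
  fixes P :: "'a set" and le :: "'a \<Rightarrow> 'a \<Rightarrow> bool" and L :: "'a \<Rightarrow> nat"
  assumes po: "is_poset P le" and lab: "is_labeling P L" and ne: "P \<noteq> {}"
begin

abbreviation "v \<equiv> chain_elem P le L"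
abbreviation "p \<equiv> chain_len P le L"
abbreviation "C \<equiv> promotion_chain P le L"

lemma fin: "finite P" using po by (simp add: is_poset_def)
lemma n1: "card P \<ge> 1" using fin ne by (simp add: Suc_le_eq card_gt_0_iff)
lemma injL: "inj_on L P" using lab by (simp add: is_labeling_def bij_betw_def)
lemma imL: "L ` P = {1..card P}" using lab by (simp add: is_labeling_def bij_betw_def)
lemma Lrng: "y \<in> P \<Longrightarrow> L y \<ge> 1 \<and> L y \<le> card P" using imL by auto

lemma v0: "v 0 \<in> P \<and> L (v 0) = 1"
proof -
  have "1 \<in> L ` P" using imL n1 by auto
  then show ?thesis by (simp add: chain_elem_def inv_into_into f_inv_into_f)
qed

lemma vsuc: "v (Suc i) = lsucc P le L (v i)"
  by (simp add: chain_elem_def)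

lemma lsucc_prop:
  assumes y: "y \<in> P" and nm: "\<not> is_maximal P le y"
  shows "lsucc P le L y \<in> P \<and> le y (lsucc P le L y) \<and> lsucc P le L y \<noteq> y \<and>
     (\<forall>z\<in>P. le y z \<and> z \<noteq> y \<longrightarrow> L (lsucc P le L y) \<le> L z)"
proof -
  obtain z where "z \<in> P" "le y z" "z \<noteq> y" using y nm by (auto simp: is_maximal_def)
  then have "(\<lambda>z. z \<in> P \<and> le y z \<and> z \<noteq> y) z" by simp
  from arg_min_nat_lemma[of "\<lambda>z. z \<in> P \<and> le y z \<and> z \<noteq> y", OF this, of L]
  show ?thesis by (simp add: lsucc_def)
qed

lemma chain_mono:
  "(\<forall>k<j. \<not> is_maximal P le (v k)) \<Longrightarrow> (\<forall>i\<le>j. v i \<in> P) \<and> (\<forall>i<j. le (v i) (v j) \<and> v i \<noteq> v j)"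
proof (induction j)
  case 0 then show ?case using v0 by simp
next
  case (Suc j)
  then have IH: "\<forall>i\<le>j. v i \<in> P" "\<forall>i<j. le (v i) (v j) \<and> v i \<noteq> v j" by auto
  have vj: "v j \<in> P" using IH by simp
  have nm: "\<not> is_maximal P le (v j)" using Suc.prems by auto
  note ls = lsucc_prop[OF vj nm]
  have vs: "v (Suc j) \<in> P" "le (v j) (v (Suc j))" "v (Suc j) \<noteq> v j"
    using ls vsuc by auto
  have all: "\<forall>i\<le>Suc j. v i \<in> P" using IH(1) vs(1) le_Suc_eq by auto
  have "\<forall>i<Suc j. le (v i) (v (Suc j)) \<and> v i \<noteq> v (Suc j)"
  proof (intro allI impI)
    fix i assume "i < Suc j"
    then consider "i = j" | "i < j" by linarith
    then show "le (v i) (v (Suc j)) \<and> v i \<noteq> v (Suc j)"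
    proof cases
      case 1 then show ?thesis using vs by auto
    next
      case 2
      have vi: "v i \<in> P" using IH(1) 2 by simp
      have a: "le (v i) (v j)" "v i \<noteq> v j" using IH(2) 2 by auto
      have t: "le (v i) (v (Suc j))"
        using po vi vj vs a unfolding is_poset_def by blast
      have "v i \<noteq> v (Suc j)"
      proof
        assume e: "v i = v (Suc j)"
        then have "le (v j) (v i)" using vs by simp
        then have "v i = v j" using po vi vj a unfolding is_poset_def by blast
        then show False using a by simp
      qed
      then show ?thesis using t by simp
    qed
  qed
  then show ?case using all by simp
qed

lemma ex_max: "\<exists>i. is_maximal P le (v i)"
proof (rule ccontr)
  assume "\<not> ?thesis"
  then have h: "\<forall>i. \<not> is_maximal P le (v i)" by simp
  have inj: "inj v"
  proof (rule injI)
    fix i j assume e: "v i = v j"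
    show "i = j"
    proof (rule ccontr)
      assume "i \<noteq> j"
      then consider "i < j" | "j < i" by linarith
      then show False
      proof cases
        case 1 then show False using chain_mono[of j] h e by auto
      next
        case 2 then show False using chain_mono[of i] h e by auto
      qed
    qed
  qed
  have "range v \<subseteq> P" using chain_mono h by blast
  then have "finite (range v)" using fin finite_subset by blast
  then show False using inj finite_imageD by (metis infinite_UNIV_nat)
qed

lemma p_max: "is_maximal P le (v p)"
  unfolding chain_len_def using ex_max by (rule LeastI_ex)

lemma below_p: "i < p \<Longrightarrow> \<not> is_maximal P le (v i)"
  unfolding chain_len_def by (rule not_less_Least)

lemma chain_p: "(\<forall>i\<le>p. v i \<in> P) \<and> (\<forall>i<p. le (v i) (v p) \<and> v i \<noteq> v p)"
  using chain_mono below_p by blast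

lemma vP: "i \<le> p \<Longrightarrow> v i \<in> P"
  using chain_p by blast

lemma vdist: "i \<le> p \<Longrightarrow> j \<le> p \<Longrightarrow> v i = v j \<Longrightarrow> i = j"
proof (rule ccontr)
  assume a: "i \<le> p" "j \<le> p" "v i = v j" "i \<noteq> j"
  have h: "\<And>a b. a < b \<Longrightarrow> b \<le> p \<Longrightarrow> v a \<noteq> v b"
  proof -
    fix a b :: nat assume "a < b" "b \<le> p"
    then have "\<forall>k<b. \<not> is_maximal P le (v k)" using below_p by auto
    then show "v a \<noteq> v b" using chain_mono[of b] \<open>a < b\<close> by auto
  qed
  from a show False using h[of i j] h[of j i] by (metis linorder_neqE_nat)
qed

lemma C_eq: "C = v ` {..p}"
  unfolding promotion_chain_def by auto

lemma C_P: "C \<subseteq> P" using C_eq vP by auto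

lemma v0C: "v 0 \<in> C" using C_eq by auto

lemma top_iff: "y \<in> C \<Longrightarrow> is_maximal P le y \<longleftrightarrow> y = v p"
  using C_eq below_p p_max by (auto simp: order.order_iff_strict)

lemma sig_prop:
  assumes y: "y \<in> P" and nt: "\<not> (y \<in> C \<and> is_maximal P le y)"
  shows "sig P le L y \<in> P \<and> sig P le L y \<noteq> v 0 \<and> promotion P le L y = L (sig P le L y) - 1
     \<and> (y \<in> C \<longrightarrow> sig P le L y \<in> C)"
proof (cases "y \<in> C")
  case True
  then obtain i where i: "i \<le> p" "y = v i" using C_eq by auto
  have "i \<noteq> p" using p_max nt True i by auto
  then have ip: "Suc i \<le> p" using i by simp
  have s: "sig P le L y = v (Suc i)" using True i vsuc by (simp add: sig_def)
  have "v (Suc i) \<noteq> v 0" using vdist[OF ip, of 0] by auto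
  moreover have "promotion P le L y = L (sig P le L y) - 1"
    using True nt y by (simp add: promotion_def sig_def)
  ultimately show ?thesis using s vP[OF ip] C_eq ip by auto
next
  case False
  then show ?thesis using y v0C by (auto simp: promotion_def sig_def)
qed

lemma promo_top: "y \<in> C \<Longrightarrow> is_maximal P le y \<Longrightarrow> promotion P le L y = card P"
  by (simp add: promotion_def is_maximal_def)

lemma sig_inj:
  assumes y: "y \<in> P" "\<not> (y \<in> C \<and> is_maximal P le y)"
    and y': "y' \<in> P" "\<not> (y' \<in> C \<and> is_maximal P le y')"
    and e: "sig P le L y = sig P le L y'"
  shows "y = y'"
proof -
  have g: "\<And>z. z \<in> C \<Longrightarrow> \<not> is_maximal P le z \<Longrightarrow> \<exists>i. Suc i \<le> p \<and> z = v i \<and> sig P le L z = v (Suc i)"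
  proof -
    fix z assume z: "z \<in> C" "\<not> is_maximal P le z"
    then obtain i where i: "i \<le> p" "z = v i" using C_eq by auto
    have "i \<noteq> p" using p_max z i by auto
    then show "\<exists>i. Suc i \<le> p \<and> z = v i \<and> sig P le L z = v (Suc i)"
      using i z vsuc by (intro exI[of _ i]) (auto simp: sig_def)
  qed
  show ?thesis
  proof (cases "y \<in> C")
    case yC: True
    obtain i where i: "Suc i \<le> p" "y = v i" "sig P le L y = v (Suc i)" using g yC y by blast
    show ?thesis
    proof (cases "y' \<in> C")
      case True
      obtain j where j: "Suc j \<le> p" "y' = v j" "sig P le L y' = v (Suc j)" using g True y' by blast
      have "Suc i = Suc j" using vdist[OF i(1) j(1)] i j e by simp
      then show ?thesis using i j by simp
    next
      case False
      then have "sig P le L y' = y'" by (simp add: sig_def)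
      then have "y' = v (Suc i)" using e i by simp
      then show ?thesis using False C_eq i by auto
    qed
  next
    case yC: False
    then have sy: "sig P le L y = y" by (simp add: sig_def)
    show ?thesis
    proof (cases "y' \<in> C")
      case True
      obtain j where j: "Suc j \<le> p" "y' = v j" "sig P le L y' = v (Suc j)" using g True y' by blast
      then have "y = v (Suc j)" using e sy by simp
      then show ?thesis using yC C_eq j by auto
    next
      case False
      then show ?thesis using e sy by (simp add: sig_def)
    qed
  qed
qed

lemma promo_lab: "is_labeling P (promotion P le L)"
  unfolding is_labeling_def
proof (rule bij_from_inj[OF fin])
  have L0: "L (v 0) = 1" "v 0 \<in> P" using v0 by auto
  have bnd: "\<And>y. y \<in> P \<Longrightarrow> \<not> (y \<in> C \<and> is_maximal P le y) \<Longrightarrow>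
      L (sig P le L y) \<ge> 2 \<and> L (sig P le L y) \<le> card P"
  proof -
    fix y assume "y \<in> P" "\<not> (y \<in> C \<and> is_maximal P le y)"
    note s = sig_prop[OF this]
    have "L (sig P le L y) \<noteq> 1" using s L0 injL by (metis inj_onD)
    then show "L (sig P le L y) \<ge> 2 \<and> L (sig P le L y) \<le> card P" using Lrng s by fastforce
  qed
  show "promotion P le L ` P \<subseteq> {1..card P}"
  proof
    fix k assume "k \<in> promotion P le L ` P"
    then obtain y where y: "y \<in> P" "k = promotion P le L y" by auto
    show "k \<in> {1..card P}"
    proof (cases "y \<in> C \<and> is_maximal P le y")
      case True then show ?thesis using y promo_top n1 by auto
    next
      case False then show ?thesis using y sig_prop[OF y(1) False] bnd[OF y(1) False] by auto
    qed
  qed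
  show "inj_on (promotion P le L) P"
  proof
    fix y y' assume y: "y \<in> P" and y': "y' \<in> P" and e: "promotion P le L y = promotion P le L y'"
    show "y = y'"
    proof (cases "y \<in> C \<and> is_maximal P le y")
      case T: True
      show ?thesis
      proof (cases "y' \<in> C \<and> is_maximal P le y'")
        case True then show ?thesis using T top_iff by auto
      next
        case False
        then show ?thesis using e promo_top[of y] T sig_prop[OF y' False] bnd[OF y' False] by auto
      qed
    next
      case F: False
      show ?thesis
      proof (cases "y' \<in> C \<and> is_maximal P le y'")
        case True
        then show ?thesis using e promo_top[of y'] sig_prop[OF y F] bnd[OF y F] by auto
      next
        case False
        have "L (sig P le L y) = L (sig P le L y')"
          using e sig_prop[OF y F] bnd[OF y F] sig_prop[OF y' False] bnd[OF y' False] by auto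
        then have "sig P le L y = sig P le L y'"
          using injL sig_prop[OF y F] sig_prop[OF y' False] by (meson inj_onD)
        then show ?thesis using sig_inj y F y' False by blast
      qed
    qed
  qed
qed


lemma one_step:
  assumes x0: "x0 \<in> P" and nc: "x0 \<notin> C"
  shows "standardize (P - {x0}) (promotion P le L) = promotion (P - {x0}) le (standardize (P - {x0}) L)"
proof -
  define Q where "Q = P - {x0}"
  define Lt where "Lt = standardize Q L"
  have finQ: "finite Q" using fin Q_def by simp
  have cQ: "card Q = card P - 1" using Q_def x0 fin by simp
  have injQ: "inj_on L Q" using injL Q_def inj_on_subset by blast
  note sp = std_props[OF finQ injQ, folded Lt_def]
  have ordLt: "\<And>y y'. y \<in> Q \<Longrightarrow> y' \<in> Q \<Longrightarrow> Lt y < Lt y' \<longleftrightarrow> L y < L y'" using sp by blast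
  have z: "\<forall>y. y \<notin> Q \<longrightarrow> promotion Q le Lt y = 0" by (simp add: promotion_def)
  have poQ: "is_poset Q le"
  proof -
    have "finite Q" by (rule finQ)
    moreover have "\<forall>x\<in>Q. le x x" using po unfolding is_poset_def Q_def by blast
    moreover have "\<forall>x\<in>Q. \<forall>y\<in>Q. le x y \<and> le y x \<longrightarrow> x = y" using po unfolding is_poset_def Q_def by blast
    moreover have "\<forall>x\<in>Q. \<forall>y\<in>Q. \<forall>z\<in>Q. le x y \<and> le y z \<longrightarrow> le x z" using po unfolding is_poset_def Q_def by blast
    ultimately show ?thesis unfolding is_poset_def by blast
  qed
  have labQ: "is_labeling Q Lt" using sp by (simp add: is_labeling_def)
  show ?thesis
  proof (cases "Q = {}")
    case True
    show ?thesis unfolding Q_def[symmetric] Lt_def[symmetric]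
      by (rule std_char) (use True z in \<open>simp_all add: bij_betw_def\<close>)
  next
    case False
    interpret Q: plab Q le Lt using poQ labQ False by unfold_locales
    have CQ: "C \<subseteq> Q" using C_P nc Q_def by auto
    have Lt0: "Lt (v 0) = 1"
    proof -
      have v0Q: "v 0 \<in> Q" using CQ v0C by auto
      have one: "\<And>y'. y' \<in> Q \<Longrightarrow> L y' \<le> L (v 0) \<Longrightarrow> y' = v 0"
      proof -
        fix y' assume a: "y' \<in> Q" "L y' \<le> L (v 0)"
        have "y' \<in> P" using a Q_def by simp
        then have "L y' \<ge> 1" using Lrng by simp
        then have "L y' = L (v 0)" using a v0 by simp
        then show "y' = v 0" using injL \<open>y' \<in> P\<close> v0 by (meson inj_onD)
      qed
      have "{y'\<in>Q. L y' \<le> L (v 0)} = {v 0}" using one v0Q by auto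
      moreover have "Lt (v 0) = card {y'\<in>Q. L y' \<le> L (v 0)}"
        by (rule rank_unique[OF finQ _ _ v0Q]) (use sp in blast)+
      ultimately show ?thesis by simp
    qed
    have cQ0: "chain_elem Q le Lt 0 = v 0"
    proof -
      have "v 0 \<in> Q" using CQ v0C by auto
      then have "inv_into Q Lt (Lt (v 0)) = v 0" using Q.injL by (simp add: inv_into_f_f)
      then show ?thesis using Lt0 by (simp add: chain_elem_def)
    qed
    have lsQ: "\<And>i. i < p \<Longrightarrow> lsucc Q le Lt (v i) = v (Suc i)"
    proof -
      fix i assume i: "i < p"
      have viP: "v i \<in> P" using vP i by simp
      have nm: "\<not> is_maximal P le (v i)" using below_p i by simp
      note ls = lsucc_prop[OF viP nm]
      have w: "v (Suc i) = lsucc P le L (v i)" by (rule vsuc)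
      have wQ: "v (Suc i) \<in> Q" using CQ C_eq i by auto
      let ?R = "\<lambda>z. z \<in> Q \<and> le (v i) z \<and> z \<noteq> v i"
      have Rw: "?R (v (Suc i))" using wQ ls w by simp
      have minw: "\<And>z. ?R z \<Longrightarrow> Lt (v (Suc i)) \<le> Lt z"
      proof -
        fix z assume Rz: "?R z"
        then have "L (v (Suc i)) \<le> L z" using ls w Q_def by auto
        then have "\<not> Lt z < Lt (v (Suc i))" using ordLt[of z "v (Suc i)"] Rz wQ by auto
        then show "Lt (v (Suc i)) \<le> Lt z" by simp
      qed
      have e: "Lt (arg_min Lt ?R) = Lt (v (Suc i))" by (rule arg_min_equality[of ?R "v (Suc i)" Lt, OF Rw minw])
      have "?R (arg_min Lt ?R)" by (rule arg_min_natI[of ?R "v (Suc i)" Lt, OF Rw])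
      then have "arg_min Lt ?R = v (Suc i)" using e wQ Q.injL by (meson inj_onD)
      then show "lsucc Q le Lt (v i) = v (Suc i)" by (simp add: lsucc_def)
    qed
    have cQi: "\<And>i. i \<le> p \<Longrightarrow> chain_elem Q le Lt i = v i"
    proof -
      fix i show "i \<le> p \<Longrightarrow> chain_elem Q le Lt i = v i"
      proof (induction i)
        case 0 then show ?case using cQ0 by simp
      next
        case (Suc i)
        then have "chain_elem Q le Lt i = v i" by simp
        then show ?case using Q.vsuc[of i] lsQ[of i] Suc.prems by simp
      qed
    qed
    have maxQ: "\<And>y. y \<in> C \<Longrightarrow> is_maximal Q le y \<longleftrightarrow> is_maximal P le y"
    proof -
      fix y assume yC: "y \<in> C"
      then obtain i where i: "i \<le> p" "y = v i" using C_eq by auto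
      show "is_maximal Q le y \<longleftrightarrow> is_maximal P le y"
      proof (cases "i = p")
        case True
        then have "is_maximal P le y" using p_max i by simp
        moreover then have "is_maximal Q le y" using yC CQ Q_def by (auto simp: is_maximal_def)
        ultimately show ?thesis by simp
      next
        case False
        then have ip: "i < p" using i by simp
        have "\<not> is_maximal P le y" using below_p ip i by simp
        moreover have "\<not> is_maximal Q le y"
        proof -
          have viP: "v i \<in> P" using vP i by simp
          note ls = lsucc_prop[OF viP below_p[OF ip]]
          have "v (Suc i) \<in> Q" using CQ C_eq ip by auto
          then show ?thesis using ls vsuc[of i] i unfolding is_maximal_def by auto
        qed
        ultimately show ?thesis by simp
      qed
    qed
    have lenQ: "chain_len Q le Lt = p"
      unfolding chain_len_def[of Q]
    proof (rule Least_equality)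
      show "is_maximal Q le (chain_elem Q le Lt p)"
        using cQi[of p] maxQ[of "v p"] p_max C_eq by auto
      fix y assume a: "is_maximal Q le (chain_elem Q le Lt y)"
      show "p \<le> y"
      proof (rule ccontr)
        assume "\<not> p \<le> y"
        then have "y < p" by simp
        then show False using a cQi[of y] maxQ[of "v y"] below_p[of y] C_eq by auto
      qed
    qed
    have CQeq: "promotion_chain Q le Lt = C"
      unfolding promotion_chain_def lenQ using cQi by (auto; metis)
    have topeq: "\<And>y. y \<in> Q \<Longrightarrow> (y \<in> promotion_chain Q le Lt \<and> is_maximal Q le y) \<longleftrightarrow> (y \<in> C \<and> is_maximal P le y)"
      using CQeq maxQ by auto
    have sigeq: "\<And>y. y \<in> Q \<Longrightarrow> \<not> (y \<in> C \<and> is_maximal P le y) \<Longrightarrow> sig Q le Lt y = sig P le L y"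
    proof -
      fix y assume y: "y \<in> Q" "\<not> (y \<in> C \<and> is_maximal P le y)"
      show "sig Q le Lt y = sig P le L y"
      proof (cases "y \<in> C")
        case True
        then obtain i where i: "i \<le> p" "y = v i" using C_eq by auto
        have "i \<noteq> p" using p_max y True i by auto
        then have "i < p" using i by simp
        then show ?thesis using lsQ vsuc True i CQeq by (simp add: sig_def)
      next
        case False then show ?thesis using CQeq by (simp add: sig_def)
      qed
    qed
    have ord: "\<forall>y\<in>Q. \<forall>y'\<in>Q. promotion Q le Lt y < promotion Q le Lt y' \<longleftrightarrow> promotion P le L y < promotion P le L y'"
    proof (intro ballI)
      fix y y' assume y: "y \<in> Q" and y': "y' \<in> Q"
      have L0: "L (v 0) = 1" using v0 by simp
      have vals: "          (u \<in> C \<and> is_maximal P le u \<longrightarrow> promotion P le L u = card P \<and> promotion Q le Lt u = card P - 1) \<and>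
          (\<not> (u \<in> C \<and> is_maximal P le u) \<longrightarrow> (\<exists>a. a \<in> Q \<and> promotion P le L u = L a - 1 \<and> promotion Q le Lt u = Lt a - 1
             \<and> 2 \<le> L a \<and> L a \<le> card P \<and> 2 \<le> Lt a \<and> Lt a \<le> card P - 1))" if u: "u \<in> Q" for u
      proof -
        have uP: "u \<in> P" using u Q_def by simp
        show ?thesis
        proof (rule conjI[OF impI impI])
          assume t: "u \<in> C \<and> is_maximal P le u"
          then show "promotion P le L u = card P \<and> promotion Q le Lt u = card P - 1"
            using promo_top Q.promo_top[of u] topeq[OF u] cQ by auto
        next
          assume nt: "\<not> (u \<in> C \<and> is_maximal P le u)"
          note s = sig_prop[OF uP nt]
          have ntQ: "\<not> (u \<in> promotion_chain Q le Lt \<and> is_maximal Q le u)" using topeq[OF u] nt by simp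
          note sQ = Q.sig_prop[OF u ntQ]
          define a where "a = sig P le L u"
          have aQ: "a \<in> Q"
          proof (cases "u \<in> C")
            case True then show ?thesis using s CQ a_def by auto
          next
            case False then show ?thesis using u a_def by (simp add: sig_def)
          qed
          have sa: "sig Q le Lt u = a" using sigeq[OF u nt] a_def by simp
          have a1: "L a \<noteq> 1" using s L0 injL a_def v0 by (metis inj_onD)
          have a2: "Lt a \<noteq> 1" using sQ sa Q.v0 Q.injL aQ by (metis inj_onD)
          have "Lt a \<ge> 1 \<and> Lt a \<le> card Q" using Q.Lrng aQ by simp
          moreover have "L a \<ge> 1 \<and> L a \<le> card P" using Lrng s a_def by simp
          ultimately show "\<exists>a. a \<in> Q \<and> promotion P le L u = L a - 1 \<and> promotion Q le Lt u = Lt a - 1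
             \<and> 2 \<le> L a \<and> L a \<le> card P \<and> 2 \<le> Lt a \<and> Lt a \<le> card P - 1"
            using aQ s sQ sa a_def a1 a2 cQ by (intro exI[of _ a]) auto
        qed
      qed
      have vt: "\<And>u. u \<in> Q \<Longrightarrow> u \<in> C \<and> is_maximal P le u \<Longrightarrow> promotion P le L u = card P \<and> promotion Q le Lt u = card P - 1"
        using vals by blast
      have vn: "\<And>u. u \<in> Q \<Longrightarrow> \<not> (u \<in> C \<and> is_maximal P le u) \<Longrightarrow> (\<exists>a. a \<in> Q \<and> promotion P le L u = L a - 1 \<and> promotion Q le Lt u = Lt a - 1
             \<and> 2 \<le> L a \<and> L a \<le> card P \<and> 2 \<le> Lt a \<and> Lt a \<le> card P - 1)"
        using vals by blast
      show "promotion Q le Lt y < promotion Q le Lt y' \<longleftrightarrow> promotion P le L y < promotion P le L y'"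
      proof (cases "y \<in> C \<and> is_maximal P le y")
        case T: True
        note vy = vt[OF y T]
        show ?thesis
        proof (cases "y' \<in> C \<and> is_maximal P le y'")
          case True
          note vy' = vt[OF y' True]
          show ?thesis using vy vy' by simp
        next
          case False
          then obtain b where b: "b \<in> Q" "promotion P le L y' = L b - 1" "promotion Q le Lt y' = Lt b - 1"
             "2 \<le> L b" "L b \<le> card P" "2 \<le> Lt b" "Lt b \<le> card P - 1" using vn[OF y'] by blast
          have "promotion P le L y = card P" "promotion Q le Lt y = card P - 1" using vy by simp_all
          then show ?thesis using b(2-7) by linarith
        qed
      next
        case F: False
        then obtain a where a: "a \<in> Q" "promotion P le L y = L a - 1" "promotion Q le Lt y = Lt a - 1"
             "2 \<le> L a" "L a \<le> card P" "2 \<le> Lt a" "Lt a \<le> card P - 1" using vn[OF y] by blast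
        show ?thesis
        proof (cases "y' \<in> C \<and> is_maximal P le y'")
          case True
          note vy' = vt[OF y' True]
          have "promotion P le L y' = card P" "promotion Q le Lt y' = card P - 1" using vy' by simp_all
          then show ?thesis using a(2-7) by linarith
        next
          case False
          then obtain b where b: "b \<in> Q" "promotion P le L y' = L b - 1" "promotion Q le Lt y' = Lt b - 1"
             "2 \<le> L b" "L b \<le> card P" "2 \<le> Lt b" "Lt b \<le> card P - 1" using vn[OF y'] by blast
          have "Lt a < Lt b \<longleftrightarrow> L a < L b" using ordLt a(1) b(1) by blast
          then show ?thesis using a(2-7) b(2-7) by linarith
        qed
      qed
    qed
    have bij: "bij_betw (promotion Q le Lt) Q {1..card Q}"
      using Q.promo_lab by (simp add: is_labeling_def)
    have "standardize Q (promotion P le L) = promotion Q le Lt"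
      by (rule std_char[OF finQ bij]) (use ord z in auto)
    then show ?thesis using Q_def Lt_def by simp
  qed
qed

end


lemma iter_main:
  assumes po: "is_poset P le" and lab: "is_labeling P L" and x0: "x0 \<in> P"
  shows "(\<forall>\<alpha><\<gamma>. x0 \<notin> promotion_chain P le ((promotion P le ^^ \<alpha>) L)) \<Longrightarrow>
    is_labeling P ((promotion P le ^^ \<gamma>) L) \<and>
    standardize (P - {x0}) ((promotion P le ^^ \<gamma>) L) = (promotion (P - {x0}) le ^^ \<gamma>) (standardize (P - {x0}) L)"
proof (induction \<gamma>)
  case 0 then show ?case using lab by simp
next
  case (Suc g)
  then have IH: "is_labeling P ((promotion P le ^^ g) L)"
    "standardize (P - {x0}) ((promotion P le ^^ g) L) = (promotion (P - {x0}) le ^^ g) (standardize (P - {x0}) L)"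
    by auto
  interpret G: plab P le "(promotion P le ^^ g) L" using po IH(1) x0 by unfold_locales auto
  have nc: "x0 \<notin> promotion_chain P le ((promotion P le ^^ g) L)" using Suc.prems by simp
  show ?case using G.promo_lab G.one_step[OF x0 nc] IH(2) by simp
qed

theorem mainTheorem10:
  fixes P :: "'a set" and le :: "'a \<Rightarrow> 'a \<Rightarrow> bool" and L :: "'a \<Rightarrow> nat"
    and x0 :: 'a and \<gamma> :: nat
  assumes "is_poset P le"
    and "is_labeling P L"
    and "x0 \<in> P"
    and "\<forall>\<alpha><\<gamma>. x0 \<notin> promotion_chain P le ((promotion P le ^^ \<alpha>) L)"
  shows "\<forall>y \<in> P - {x0}.
           standardize (P - {x0}) ((promotion P le ^^ \<gamma>) L) y
         = (promotion (P - {x0}) le ^^ \<gamma>) (standardize (P - {x0}) L) y"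
  using iter_main[OF assms(1-3) assms(4)] by simp

end
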